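(* For each $m\geq1$, $\mathrm{Aut}_m(H)$ is a normal subgroup of $\mathrm{Aut}_c(H)$. Moreover, $\mathrm{Aut}_0(H)\supseteq\mathrm{Aut}_1(H)\supseteq\mathrm{Aut}_2(H)\supseteq\cdots$.
   Context: Let $k$ be a field and $0\neq q\in k$ not a root of unity. $H=k_q[x,x^{-1},y]$ is the $k$-algebra generated by $x,x^{-1},y$ with $xx^{-1}=x^{-1}x=1$, $yx=qxy$, a Hopf algebra with $\Delta(x)=x\otimes x$, $\Delta(x^{-1})=x^{-1}\otimes x^{-1}$, $\Delta(y)=y\otimes x+1\otimes y$, $\varepsilon(x)=1$, $\varepsilon(y)=0$; $\{x^ny^m:n\in\mathbb{Z},m\in\mathbb{N}\}$ is a $k$-basis. $H_0=\mathrm{span}\{x^n\}$, $H(m)=H_0y^m$. $\mathrm{Aut}_c(H)$ is the group under composition of coalgebra automorphisms of $H$; $\mathrm{Aut}_0(H)=\{\phi\in\mathrm{Aut}_c(H):\phi(1)=1\}$; for $m\geq1$, $\mathrm{Aut}_m(H)=\{\phi\in\mathrm{Aut}_c(H):\phi(h)=h\text{ for all }h\in\sum_{i=0}^mH(i)\}$. *)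

theory Defs
  imports "HOL-Algebra.Algebra"
begin

text \<open>Model of H = k_q[x,x^{-1},y]: an element is the coefficient function on the
basis x^n y^m, indexed by (n,m) :: int \<times> nat, with finite support.
Elements of H \<otimes> H are coefficient functions on pairs of basis indices.\<close>

type_synonym idx = "int \<times> nat"
type_synonym 'k hq = "idx \<Rightarrow> 'k"
type_synonym 'k hq2 = "idx \<times> idx \<Rightarrow> 'k"

definition supp :: "('a \<Rightarrow> 'k::zero) \<Rightarrow> 'a set" where
  "supp f = {b. f b \<noteq> 0}"

definition Hsp :: "'k::zero hq set" where
  "Hsp = {f. finite (supp f)}"

definition bas :: "idx \<Rightarrow> 'k::{zero,one} hq" where
  "bas b = (\<lambda>c. if c = b then 1 else 0)"

definition tbas :: "idx \<Rightarrow> idx \<Rightarrow> 'k::{zero,one} hq2" where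
  "tbas b1 b2 = (\<lambda>c. if c = (b1, b2) then 1 else 0)"

definition iadd :: "idx \<Rightarrow> idx \<Rightarrow> idx" where
  "iadd b d = (fst b + fst d, snd b + snd d)"

text \<open>twist factor: (x^a y^b)(x^c y^d) = q^(b c) x^(a+c) y^(b+d), from y x = q x y\<close>
definition tw :: "'k::field \<Rightarrow> idx \<Rightarrow> idx \<Rightarrow> 'k" where
  "tw q b d = q powi (int (snd b) * fst d)"

definition tmul :: "'k::field \<Rightarrow> 'k hq2 \<Rightarrow> 'k hq2 \<Rightarrow> 'k hq2" where
  "tmul q S T = (\<lambda>(c1, c2). \<Sum>(b1, b2)\<in>supp S. \<Sum>(d1, d2)\<in>supp T.
      if iadd b1 d1 = c1 \<and> iadd b2 d2 = c2
      then S (b1, b2) * T (d1, d2) * tw q b1 d1 * tw q b2 d2 else 0)"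

fun tpow :: "'k::field \<Rightarrow> 'k hq2 \<Rightarrow> nat \<Rightarrow> 'k hq2" where
  "tpow q S 0 = tbas (0, 0) (0, 0)"
| "tpow q S (Suc m) = tmul q (tpow q S m) S"

text \<open>\<Delta>(x^n y^m) = \<Delta>(x)^n \<Delta>(y)^m = (x^n \<otimes> x^n)(y \<otimes> x + 1 \<otimes> y)^m\<close>
definition Dbas :: "'k::field \<Rightarrow> idx \<Rightarrow> 'k hq2" where
  "Dbas q b = tmul q (tbas (fst b, 0) (fst b, 0))
      (tpow q (\<lambda>c. tbas (0, 1) (1, 0) c + tbas (0, 0) (0, 1) c) (snd b))"

definition Delta :: "'k::field \<Rightarrow> 'k hq \<Rightarrow> 'k hq2" where
  "Delta q f = (\<lambda>c. \<Sum>b\<in>supp f. f b * Dbas q b c)"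

text \<open>counit: \<epsilon>(x^n y^m) = 1^n 0^m\<close>
definition eps :: "'k::field hq \<Rightarrow> 'k" where
  "eps f = (\<Sum>b\<in>supp f. f b * 0 ^ snd b)"

definition tmap :: "('k::field hq \<Rightarrow> 'k hq) \<Rightarrow> 'k hq2 \<Rightarrow> 'k hq2" where
  "tmap \<phi> T = (\<lambda>(c1, c2). \<Sum>(b1, b2)\<in>supp T. T (b1, b2) * \<phi> (bas b1) c1 * \<phi> (bas b2) c2)"

definition klinear :: "('k::field hq \<Rightarrow> 'k hq) \<Rightarrow> bool" where
  "klinear \<phi> \<longleftrightarrow> (\<forall>f\<in>Hsp. \<forall>g\<in>Hsp. \<phi> (\<lambda>b. f b + g b) = (\<lambda>b. \<phi> f b + \<phi> g b))
                 \<and> (\<forall>f\<in>Hsp. \<forall>a. \<phi> (\<lambda>b. a * f b) = (\<lambda>b. a * \<phi> f b))"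

definition Autc :: "'k::field \<Rightarrow> ('k hq \<Rightarrow> 'k hq) set" where
  "Autc q = {\<phi>. \<phi> \<in> Bij Hsp \<and> klinear \<phi>
              \<and> (\<forall>f\<in>Hsp. Delta q (\<phi> f) = tmap \<phi> (Delta q f))
              \<and> (\<forall>f\<in>Hsp. eps (\<phi> f) = eps f)}"

definition AutcGroup :: "'k::field \<Rightarrow> ('k hq \<Rightarrow> 'k hq) monoid" where
  "AutcGroup q = BijGroup Hsp \<lparr>carrier := Autc q\<rparr>"

definition Aut0 :: "'k::field \<Rightarrow> ('k hq \<Rightarrow> 'k hq) set" where
  "Aut0 q = {\<phi>\<in>Autc q. \<phi> (bas (0, 0)) = bas (0, 0)}"

text \<open>\<Sum>_{i\<le>m} H(i): elements with all y-degrees \<le> m\<close>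
definition Hle :: "nat \<Rightarrow> 'k::field hq set" where
  "Hle m = {f\<in>Hsp. \<forall>b. m < snd b \<longrightarrow> f b = 0}"

definition Autm :: "'k::field \<Rightarrow> nat \<Rightarrow> ('k hq \<Rightarrow> 'k hq) set" where
  "Autm q m = {\<phi>\<in>Autc q. \<forall>h\<in>Hle m. \<phi> h = h}"

end

theory Submission
  imports Defs
begin


definition dy :: "'k::field hq2" where
  "dy = (\<lambda>c. tbas (0, 1) (1, 0) c + tbas (0, 0) (0, 1) c)"

lemma tmul_eq: "tmul q S T c = (\<Sum>p\<in>supp S. \<Sum>r\<in>supp T.
   if iadd (fst p) (fst r) = fst c \<and> iadd (snd p) (snd r) = snd c
   then S p * T r * tw q (fst p) (fst r) * tw q (snd p) (snd r) else 0)"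
  unfolding tmul_def split_def prod.collapse ..

lemma finite_tmul: "finite (supp (tmul q S T))"
proof (cases "finite (supp S) \<and> finite (supp T)")
  case True
  let ?I = "(\<lambda>(p, r). (iadd (fst p) (fst r), iadd (snd p) (snd r))) ` (supp S \<times> supp T)"
  have "supp (tmul q S T) \<subseteq> ?I"
  proof
    fix c assume c: "c \<in> supp (tmul q S T)"
    show "c \<in> ?I"
    proof (rule ccontr)
      assume nc: "c \<notin> ?I"
      have "tmul q S T c = 0" unfolding tmul_eq
        by (rule sum.neutral, rule ballI, rule sum.neutral) (use nc in force)
      with c show False by (simp add: supp_def)
    qed
  qed
  then show ?thesis using True by (meson finite_SigmaI finite_imageI finite_subset)
next
  case False
  have "tmul q S T = (\<lambda>_. 0)"
  proof
    fix c show "tmul q S T c = 0"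
    proof (cases "finite (supp S)")
      case True
      then have "\<not> finite (supp T)" using False by blast
      then show ?thesis unfolding tmul_eq by simp
    next
      case False then show ?thesis unfolding tmul_eq by simp
    qed
  qed
  then show ?thesis by (simp add: supp_def)
qed

lemma supp_tbas: "supp (tbas a b :: 'k::field hq2) = {(a, b)}"
  by (auto simp: supp_def tbas_def)

lemma finite_tpow: "finite (supp (tpow q S k))"
  by (cases k) (simp_all add: finite_tmul supp_tbas)

lemma supp_dy: "supp (dy :: 'k::field hq2) = {((0,1),(1,0)), ((0,0),(0,1))}"
  by (auto simp: supp_def dy_def tbas_def)

lemma tmul_dy:
  fixes S :: "'k::field hq2"
  assumes "finite (supp S)"
  shows "tmul q S dy ((a,i),(b,j)) = (if i \<ge> 1 then S ((a,i-1),(b-1,j)) * q ^ j else 0)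
     + (if j \<ge> 1 then S ((a,i),(b,j-1)) else 0)"
proof -
  have e: "\<And>p. (\<Sum>r\<in>supp dy.
     if iadd (fst p) (fst r) = (a,i) \<and> iadd (snd p) (snd r) = (b,j)
     then S p * (dy::'k hq2) r * tw q (fst p) (fst r) * tw q (snd p) (snd r) else 0)
     = (if p = ((a,i-1),(b-1,j)) then (if i \<ge> 1 then S p * q ^ j else 0) else 0)
     + (if p = ((a,i),(b,j-1)) then (if j \<ge> 1 then S p else 0) else 0)"
  proof -
    fix p :: "idx \<times> idx"
    obtain x1 y1 x2 y2 where p: "p = ((x1,y1),(x2,y2))" by (metis prod.exhaust)
    show "?thesis p" unfolding supp_dy p
      by (auto simp: iadd_def tw_def dy_def tbas_def)
  qed
  show ?thesis unfolding tmul_eq fst_conv snd_conv e sum.distrib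
    using assms by (simp add: sum.delta supp_def)
qed



lemma tpow_dy_Suc: "tpow q (\<lambda>c. tbas (0, 1) (1, 0) c + tbas (0, 0) (0, 1) c) k = tpow q dy k"
  unfolding dy_def by (rule refl)

lemma tpow_supp:
  "tpow q (dy::'k::field hq2) k c \<noteq> 0 \<Longrightarrow>
     fst (fst c) = 0 \<and> fst (snd c) = int (snd (fst c)) \<and> snd (fst c) + snd (snd c) = k"
proof (induction k arbitrary: c)
  case 0
  then show ?case by (auto simp: tbas_def split: if_splits)
next
  case (Suc k)
  obtain a i b j where c: "c = ((a,i),(b,j))" by (metis prod.exhaust)
  have "tmul q (tpow q dy k) dy ((a,i),(b,j)) \<noteq> 0" using Suc.prems c by simp
  then have "(i \<ge> 1 \<and> tpow q dy k ((a,i-1),(b-1,j)) \<noteq> 0) \<or> (j \<ge> 1 \<and> tpow q dy k ((a,i),(b,j-1)) \<noteq> 0)"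
    unfolding tmul_dy[OF finite_tpow] by (auto split: if_splits)
  then show ?case
  proof
    assume h: "i \<ge> 1 \<and> tpow q dy k ((a,i-1),(b-1,j)) \<noteq> 0"
    from Suc.IH[of "((a,i-1),(b-1,j))"] h show ?case unfolding c by auto
  next
    assume h: "j \<ge> 1 \<and> tpow q dy k ((a,i),(b,j-1)) \<noteq> 0"
    from Suc.IH[of "((a,i),(b,j-1))"] h show ?case unfolding c by auto
  qed
qed

lemma tpow_00: "tpow q (dy::'k::field hq2) k ((0,0),(0,k)) = 1"
proof (induction k)
  case 0 then show ?case by (simp add: tbas_def)
next
  case (Suc k)
  show ?case using Suc by (simp add: tmul_dy[OF finite_tpow])
qed

lemma tpow_01: "tpow q (dy::'k::field hq2) (Suc k) ((0,1),(1,k)) = (\<Sum>i<Suc k. q ^ i)"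
proof (induction k)
  case 0
  have "tpow q (dy::'k hq2) (Suc 0) ((0,1),(1,0)) = tpow q dy 0 ((0,0),(0,0))"
    using tmul_dy[OF finite_tpow[of q dy 0], where a=0 and i=1 and b=1 and j=0] by simp
  then show ?case by (simp add: tbas_def)
next
  case (Suc k)
  have "tpow q (dy::'k hq2) (Suc (Suc k)) ((0,1),(1,Suc k)) = tpow q dy (Suc k) ((0,0),(0,Suc k)) * q ^ Suc k
     + tpow q dy (Suc k) ((0,1),(1,k))"
    using tmul_dy[OF finite_tpow[of q dy "Suc k"], where a=0 and i=1 and b=1 and j="Suc k"] by simp
  then show ?case using Suc tpow_00[of q "Suc k"] by (simp add: add.commute)
qed

lemma tmul_tbas_left:
  fixes S :: "'k::field hq2"
  assumes "finite (supp S)"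
  shows "tmul q (tbas (n,0) (n,0)) S c = S ((fst (fst c) - n, snd (fst c)), (fst (snd c) - n, snd (snd c)))"
proof -
  obtain a i b j where c: "c = ((a,i),(b,j))" by (metis prod.exhaust)
  have "(\<Sum>r\<in>supp S. if iadd (n,0) (fst r) = (a,i) \<and> iadd (n,0) (snd r) = (b,j)
        then tbas (n,0) (n,0) ((n,0),(n,0)) * S r * tw q (n,0) (fst r) * tw q (n,0) (snd r) else 0)
     = (\<Sum>r\<in>supp S. if r = ((a-n,i),(b-n,j)) then S r else 0)"
    by (rule sum.cong) (auto simp: iadd_def tw_def tbas_def prod_eq_iff)
  also have "\<dots> = S ((a-n,i),(b-n,j))" using assms by (simp add: sum.delta supp_def)
  finally show ?thesis unfolding tmul_eq supp_tbas c
    by (simp only: sum.insert finite.emptyI empty_iff not_False_eq_True sum.empty add_0_right fst_conv snd_conv)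
qed

lemma Dbas_eq: "Dbas q (n,k) c = tpow q dy k ((fst (fst c) - n, snd (fst c)), (fst (snd c) - n, snd (snd c)))"
  unfolding Dbas_def tpow_dy_Suc by (simp add: tmul_tbas_left finite_tpow)

lemma Dbas_supp: "Dbas q (n,k) c \<noteq> 0 \<Longrightarrow>
   fst (fst c) = n \<and> fst (snd c) = n + int (snd (fst c)) \<and> snd (fst c) + snd (snd c) = k"
  unfolding Dbas_eq by (drule tpow_supp) auto

lemma Dbas_0: "Dbas q (n,0) = tbas (n,0) (n,0)"
proof
  fix c :: "idx \<times> idx"
  obtain a i b j where c: "c = ((a,i),(b,j))" by (metis prod.exhaust)
  show "Dbas q (n,0) c = tbas (n,0) (n,0) c"
    unfolding Dbas_eq c by (auto simp: tbas_def)
qed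

lemma Dbas_1: "Dbas q (n, Suc k) ((n,1),(n+1,k)) = (\<Sum>i<Suc k. q ^ i)"
  unfolding Dbas_eq using tpow_01[of q k] by (simp del: tpow.simps)

lemma geo_nz:
  fixes q :: "'k::field"
  assumes "\<forall>n::nat. n > 0 \<longrightarrow> q ^ n \<noteq> 1"
  shows "(\<Sum>i<Suc k. q ^ i) \<noteq> 0"
proof
  assume "(\<Sum>i<Suc k. q ^ i) = 0"
  then have "1 - q ^ Suc k = 0" using one_diff_power_eq[of q "Suc k"] by simp
  with assms show False by auto
qed



lemma bas_Hsp: "bas b \<in> Hsp"
  by (simp add: Hsp_def supp_def bas_def)

lemma Hsp_add: "f \<in> Hsp \<Longrightarrow> g \<in> Hsp \<Longrightarrow> (\<lambda>b. f b + g b) \<in> (Hsp :: 'k::field hq set)"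
  unfolding Hsp_def supp_def
  by (rule CollectI, erule CollectE, erule CollectE, rule finite_subset[of _ "{b. f b \<noteq> 0} \<union> {b. g b \<noteq> 0}"]) auto

lemma Hsp_smul: "f \<in> Hsp \<Longrightarrow> (\<lambda>b. a * f b) \<in> (Hsp :: 'k::field hq set)"
  unfolding Hsp_def supp_def
  by (rule CollectI, erule CollectE, rule finite_subset[of _ "{b. f b \<noteq> 0}"]) auto

lemma lin_eval: "finite A \<Longrightarrow> (\<Sum>b\<in>A. a b * (bas b c :: 'k::field)) = (if c \<in> A then a c else 0)"
proof -
  assume A: "finite A"
  have "(\<Sum>b\<in>A. a b * (bas b c :: 'k::field)) = (\<Sum>b\<in>A. if b = c then a b else 0)"
    by (rule sum.cong) (auto simp: bas_def)
  then show ?thesis using A by (simp add: sum.delta')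
qed

lemma Hsp_lin: "finite A \<Longrightarrow> (\<lambda>c. \<Sum>b\<in>A. a b * bas b c) \<in> (Hsp :: 'k::field hq set)"
proof -
  assume A: "finite A"
  have "supp (\<lambda>c. \<Sum>b\<in>A. a b * (bas b c :: 'k)) \<subseteq> A"
    unfolding supp_def lin_eval[OF A] by auto
  then show ?thesis using A by (simp add: Hsp_def finite_subset)
qed

lemma klin_add: "klinear \<phi> \<Longrightarrow> f \<in> Hsp \<Longrightarrow> g \<in> Hsp \<Longrightarrow> \<phi> (\<lambda>b. f b + g b) = (\<lambda>b. \<phi> f b + \<phi> g b)"
  by (simp add: klinear_def)

lemma klin_smul: "klinear \<phi> \<Longrightarrow> f \<in> Hsp \<Longrightarrow> \<phi> (\<lambda>b. a * f b) = (\<lambda>b. a * \<phi> f b)"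
  by (simp add: klinear_def)

lemma zero_Hsp: "(\<lambda>_. 0) \<in> (Hsp :: 'k::field hq set)"
  by (simp add: Hsp_def supp_def)

lemma klin_zero: "klinear \<phi> \<Longrightarrow> \<phi> (\<lambda>_. 0) = (\<lambda>_. 0)"
  using klin_smul[of \<phi> "\<lambda>_. 0" 0] zero_Hsp by simp

lemma klin_sum:
  assumes "klinear \<phi>" "finite A"
  shows "\<phi> (\<lambda>c. \<Sum>b\<in>A. a b * bas b c) = (\<lambda>c. \<Sum>b\<in>A. a b * \<phi> (bas b) c)"
  using assms(2)
proof (induction A rule: finite_induct)
  case empty
  then show ?case using klin_zero[OF assms(1)] by simp
next
  case (insert x F)
  have "(\<lambda>c. \<Sum>b\<in>insert x F. a b * bas b c) = (\<lambda>c. (\<lambda>c. a x * bas x c) c + (\<lambda>c. \<Sum>b\<in>F. a b * bas b c) c)"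
    using insert by simp
  then have "\<phi> (\<lambda>c. \<Sum>b\<in>insert x F. a b * bas b c) = (\<lambda>c. \<phi> (\<lambda>c. a x * bas x c) c + \<phi> (\<lambda>c. \<Sum>b\<in>F. a b * bas b c) c)"
    using klin_add[OF assms(1) Hsp_smul[OF bas_Hsp] Hsp_lin[OF insert(1)]] by simp
  also have "\<dots> = (\<lambda>c. a x * \<phi> (bas x) c + (\<Sum>b\<in>F. a b * \<phi> (bas b) c))"
    using klin_smul[OF assms(1) bas_Hsp] insert by simp
  finally show ?case using insert by simp
qed

lemma Hsp_expand: "(f :: 'k::field hq) \<in> Hsp \<Longrightarrow> f = (\<lambda>c. \<Sum>b\<in>supp f. f b * bas b c)"
proof
  fix c assume f: "f \<in> Hsp"
  show "f c = (\<Sum>b\<in>supp f. f b * bas b c)" using f by (simp add: lin_eval Hsp_def supp_def)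
qed

lemma klin_expand:
  assumes L: "klinear \<phi>" and f: "(f :: 'k::field hq) \<in> Hsp"
  shows "\<phi> f = (\<lambda>c. \<Sum>b\<in>supp f. f b * \<phi> (bas b) c)"
proof -
  from Hsp_expand[OF f] have "\<phi> f = \<phi> (\<lambda>c. \<Sum>b\<in>supp f. f b * bas b c)" by (rule arg_cong)
  also have "\<dots> = (\<lambda>c. \<Sum>b\<in>supp f. f b * \<phi> (bas b) c)"
    by (rule klin_sum[OF L]) (use f in \<open>simp add: Hsp_def\<close>)
  finally show ?thesis .
qed

lemma supp_bas: "supp (bas b :: 'k::field hq) = {b}"
  by (auto simp: supp_def bas_def)

lemma Delta_bas: "Delta q (bas b) = Dbas q b"
  unfolding Delta_def supp_bas by (simp add: bas_def)

lemma finite_Dbas: "finite (supp (Dbas q b))"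
  by (simp add: Dbas_def finite_tmul)

lemma finite_Delta: "finite (supp (Delta q f))"
proof (cases "finite (supp f)")
  case True
  have "supp (Delta q f) \<subseteq> (\<Union>b\<in>supp f. supp (Dbas q b))"
  proof
    fix c assume "c \<in> supp (Delta q f)"
    then have "(\<Sum>b\<in>supp f. f b * Dbas q b c) \<noteq> 0" by (simp add: supp_def Delta_def)
    then obtain b where bf: "b \<in> supp f" and nz: "f b * Dbas q b c \<noteq> 0" by (rule sum.not_neutral_contains_not_neutral)
    from nz have cD: "c \<in> supp (Dbas q b)" by (simp add: supp_def)
    from bf cD show "c \<in> (\<Union>b\<in>supp f. supp (Dbas q b))" by (rule UN_I)
  qed
  moreover have "finite (\<Union>b\<in>supp f. supp (Dbas q b))" using True finite_Dbas by blast
  ultimately show ?thesis by (rule finite_subset)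
next
  case False
  then show ?thesis by (simp add: Delta_def supp_def)
qed

lemma tmap_superset:
  assumes "finite A" "supp T \<subseteq> A"
  shows "tmap \<phi> T c = (\<Sum>p\<in>A. T p * \<phi> (bas (fst p)) (fst c) * \<phi> (bas (snd p)) (snd c))"
proof -
  have "tmap \<phi> T c = (\<Sum>p\<in>supp T. T p * \<phi> (bas (fst p)) (fst c) * \<phi> (bas (snd p)) (snd c))"
    unfolding tmap_def split_def prod.collapse ..
  also have "\<dots> = (\<Sum>p\<in>A. T p * \<phi> (bas (fst p)) (fst c) * \<phi> (bas (snd p)) (snd c))"
    by (rule sum.mono_neutral_left) (use assms in \<open>auto simp: supp_def\<close>)
  finally show ?thesis .
qed

lemma tmap_eq: "tmap \<phi> T c = (\<Sum>p\<in>supp T. T p * \<phi> (bas (fst p)) (fst c) * \<phi> (bas (snd p)) (snd c))"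
  unfolding tmap_def split_def prod.collapse ..

lemma tmap_id:
  assumes "finite (supp T)" "\<And>b. \<phi> (bas b) = bas b"
  shows "tmap \<phi> T = T"
proof
  fix c
  have "tmap \<phi> T c = (\<Sum>p\<in>supp T. if p = c then T p else 0)"
    unfolding tmap_eq assms(2) by (rule sum.cong) (auto simp: bas_def prod_eq_iff)
  also have "\<dots> = T c" using assms(1) by (simp add: sum.delta' supp_def)
  finally show "tmap \<phi> T c = T c" .
qed

lemma prod_sum:
  fixes f g :: "_ \<Rightarrow> 'k::field"
  assumes "finite A1" "finite A2"
  shows "(\<Sum>r\<in>A1 \<times> A2. f (fst r) * g (snd r)) = (\<Sum>x\<in>A1. f x) * (\<Sum>y\<in>A2. g y)"
proof -
  have "(\<Sum>x\<in>A1. f x) * (\<Sum>y\<in>A2. g y) = (\<Sum>x\<in>A1. \<Sum>y\<in>A2. f x * g y)" by (rule sum_product)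
  also have "\<dots> = (\<Sum>(x,y)\<in>A1 \<times> A2. f x * g y)" by (rule sum.cartesian_product)
  finally show ?thesis by (simp add: split_def)
qed

lemma tmap_comp:
  assumes "klinear \<phi>" "klinear \<chi>" "\<And>b. \<chi> (bas b) \<in> Hsp" "finite (supp T)"
    "\<And>b. \<psi> (bas b) = \<phi> (\<chi> (bas b))"
  shows "tmap \<phi> (tmap \<chi> T) = tmap \<psi> T"
proof
  fix c
  define A where "A p = supp (\<chi> (bas (fst p))) \<times> supp (\<chi> (bas (snd p)))" for p :: "idx \<times> idx"
  define B where "B = (\<Union>p\<in>supp T. A p)"
  have finA: "finite (A p)" for p using assms(3) by (simp add: A_def Hsp_def)
  have finB: "finite B" using finA assms(4) by (simp add: B_def)
  have sB: "supp (tmap \<chi> T) \<subseteq> B"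
  proof
    fix r assume "r \<in> supp (tmap \<chi> T)"
    then have "(\<Sum>p\<in>supp T. T p * \<chi> (bas (fst p)) (fst r) * \<chi> (bas (snd p)) (snd r)) \<noteq> 0"
      by (simp add: supp_def tmap_eq)
    then obtain p where p: "p \<in> supp T" and nz: "T p * \<chi> (bas (fst p)) (fst r) * \<chi> (bas (snd p)) (snd r) \<noteq> 0"
      by (rule sum.not_neutral_contains_not_neutral)
    from nz have "r \<in> A p" by (simp add: A_def mem_Times_iff supp_def)
    then show "r \<in> B" unfolding B_def using p by (rule UN_I[rotated])
  qed
  have inner: "(\<Sum>r\<in>B. \<chi> (bas (fst p)) (fst r) * (\<chi> (bas (snd p)) (snd r) * (\<phi> (bas (fst r)) (fst c) * \<phi> (bas (snd r)) (snd c))))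
     = \<phi> (\<chi> (bas (fst p))) (fst c) * \<phi> (\<chi> (bas (snd p))) (snd c)" if p: "p \<in> supp T" for p
  proof -
    have "(\<Sum>r\<in>B. \<chi> (bas (fst p)) (fst r) * (\<chi> (bas (snd p)) (snd r) * (\<phi> (bas (fst r)) (fst c) * \<phi> (bas (snd r)) (snd c))))
        = (\<Sum>r\<in>B. (\<chi> (bas (fst p)) (fst r) * \<phi> (bas (fst r)) (fst c)) * (\<chi> (bas (snd p)) (snd r) * \<phi> (bas (snd r)) (snd c)))"
      by (rule sum.cong[OF refl]) (simp only: mult_ac)
    also have "\<dots> = (\<Sum>r\<in>A p. (\<chi> (bas (fst p)) (fst r) * \<phi> (bas (fst r)) (fst c)) * (\<chi> (bas (snd p)) (snd r) * \<phi> (bas (snd r)) (snd c)))"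
    proof (rule sum.mono_neutral_right[OF finB])
      show "A p \<subseteq> B" using p by (auto simp: B_def)
      show "\<forall>r\<in>B - A p. (\<chi> (bas (fst p)) (fst r) * \<phi> (bas (fst r)) (fst c)) * (\<chi> (bas (snd p)) (snd r) * \<phi> (bas (snd r)) (snd c)) = 0"
        by (auto simp: A_def supp_def mem_Times_iff)
    qed
    also have "\<dots> = (\<Sum>x\<in>supp (\<chi> (bas (fst p))). \<chi> (bas (fst p)) x * \<phi> (bas x) (fst c)) *
          (\<Sum>y\<in>supp (\<chi> (bas (snd p))). \<chi> (bas (snd p)) y * \<phi> (bas y) (snd c))"
      unfolding A_def by (rule prod_sum) (use assms(3) in \<open>auto simp: Hsp_def\<close>)
    also have "\<dots> = \<phi> (\<chi> (bas (fst p))) (fst c) * \<phi> (\<chi> (bas (snd p))) (snd c)"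
      by (simp only: klin_expand[OF assms(1) assms(3)])
    finally show ?thesis .
  qed
  have "tmap \<phi> (tmap \<chi> T) c = (\<Sum>r\<in>B. (\<Sum>p\<in>supp T. T p * \<chi> (bas (fst p)) (fst r) * \<chi> (bas (snd p)) (snd r))
        * \<phi> (bas (fst r)) (fst c) * \<phi> (bas (snd r)) (snd c))"
    unfolding tmap_superset[OF finB sB] tmap_eq[of \<chi> T] ..
  also have "\<dots> = (\<Sum>r\<in>B. \<Sum>p\<in>supp T. T p * (\<chi> (bas (fst p)) (fst r) * (\<chi> (bas (snd p)) (snd r)
        * (\<phi> (bas (fst r)) (fst c) * \<phi> (bas (snd r)) (snd c)))))"
    by (simp only: sum_distrib_right mult.assoc)
  also have "\<dots> = (\<Sum>p\<in>supp T. \<Sum>r\<in>B. T p * (\<chi> (bas (fst p)) (fst r) * (\<chi> (bas (snd p)) (snd r)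
        * (\<phi> (bas (fst r)) (fst c) * \<phi> (bas (snd r)) (snd c)))))"
    by (rule sum.swap)
  also have "\<dots> = (\<Sum>p\<in>supp T. T p * (\<Sum>r\<in>B. \<chi> (bas (fst p)) (fst r) * (\<chi> (bas (snd p)) (snd r)
        * (\<phi> (bas (fst r)) (fst c) * \<phi> (bas (snd r)) (snd c)))))"
    by (simp only: sum_distrib_left)
  also have "\<dots> = (\<Sum>p\<in>supp T. T p * (\<phi> (\<chi> (bas (fst p))) (fst c) * \<phi> (\<chi> (bas (snd p))) (snd c)))"
    by (rule sum.cong[OF refl]) (simp only: inner)
  also have "\<dots> = tmap \<psi> T c" unfolding tmap_eq assms(5) by (simp only: mult.assoc)
  finally show "tmap \<phi> (tmap \<chi> T) c = tmap \<psi> T c" .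
qed



lemma Dbas_supp': "Dbas q b c \<noteq> 0 \<Longrightarrow>
   fst (fst c) = fst b \<and> fst (snd c) = fst b + int (snd (fst c)) \<and> snd (fst c) + snd (snd c) = snd b"
  using Dbas_supp[of q "fst b" "snd b" c] by simp

lemma Autc_Bij: "\<phi> \<in> Autc q \<Longrightarrow> \<phi> \<in> Bij Hsp" by (simp add: Autc_def)
lemma Autc_lin: "\<phi> \<in> Autc q \<Longrightarrow> klinear \<phi>" by (simp add: Autc_def)
lemma Autc_Delta: "\<phi> \<in> Autc q \<Longrightarrow> f \<in> Hsp \<Longrightarrow> Delta q (\<phi> f) = tmap \<phi> (Delta q f)" by (simp add: Autc_def)
lemma Autc_eps: "\<phi> \<in> Autc q \<Longrightarrow> f \<in> Hsp \<Longrightarrow> eps (\<phi> f) = eps f" by (simp add: Autc_def)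
lemma Autc_Hsp: "\<phi> \<in> Autc q \<Longrightarrow> f \<in> Hsp \<Longrightarrow> \<phi> f \<in> Hsp"
  using Autc_Bij Bij_imp_funcset by blast

lemma Hle_Hsp: "h \<in> Hle m \<Longrightarrow> h \<in> Hsp" by (simp add: Hle_def)

lemma tmap_tbas: "tmap \<phi> (tbas a a :: 'k::field hq2) c = \<phi> (bas a) (fst c) * \<phi> (bas a) (snd c)"
  unfolding tmap_eq supp_tbas by (simp add: tbas_def)

lemma max_deg:
  fixes g :: "'k::field hq"
  assumes "g \<in> Hsp" "g d \<noteq> 0"
  obtains e where "g e \<noteq> 0" "snd d \<le> snd e" "\<And>b. g b \<noteq> 0 \<Longrightarrow> snd b \<le> snd e"
proof -
  let ?K = "Max (snd ` supp g)"
  have fin: "finite (snd ` supp g)" using assms(1) by (simp add: Hsp_def)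
  have ne: "snd d \<in> snd ` supp g" using assms(2) by (simp add: supp_def)
  then have "?K \<in> snd ` supp g" using fin Max_in by blast
  then obtain e where e: "e \<in> supp g" "snd e = ?K" by auto
  have "\<And>b. g b \<noteq> 0 \<Longrightarrow> snd b \<le> ?K" using fin by (simp add: supp_def)
  moreover have "snd d \<le> ?K" using fin ne by simp
  ultimately show ?thesis using that e by (simp add: supp_def)
qed

lemma deg_base:
  assumes phi: "\<phi> \<in> Autc q" and b: "snd b = 0"
  shows "\<phi> (bas b) \<in> Hle 0"
proof (rule ccontr)
  define g where "g = \<phi> (bas b)"
  have gH: "g \<in> Hsp" using Autc_Hsp[OF phi bas_Hsp] by (simp add: g_def)
  assume "\<phi> (bas b) \<notin> Hle 0"
  then obtain d where d: "0 < snd d" "g d \<noteq> 0" using gH by (auto simp: Hle_def g_def)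
  obtain e where e: "g e \<noteq> 0" "snd d \<le> snd e" "\<And>b. g b \<noteq> 0 \<Longrightarrow> snd b \<le> snd e"
    using max_deg[OF gH d(2)] by blast
  obtain n where bb: "b = (n, 0)" using b by (metis prod.collapse)
  have "Delta q g = tmap \<phi> (Delta q (bas b))" using Autc_Delta[OF phi bas_Hsp] by (simp add: g_def)
  also have "\<dots> = tmap \<phi> (tbas b b)" unfolding bb Delta_bas Dbas_0 ..
  finally have "Delta q g (e,e) = g e * g e" unfolding tmap_tbas g_def by simp
  then have "Delta q g (e,e) \<noteq> 0" using e by simp
  moreover have "Delta q g (e,e) = 0" unfolding Delta_def
  proof (rule sum.neutral, rule ballI)
    fix b' assume "b' \<in> supp g"
    then have "g b' \<noteq> 0" by (simp add: supp_def)
    then have "snd b' \<le> snd e" by (rule e(3))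
    then have "Dbas q b' (e,e) = 0" using Dbas_supp'[of q b' "(e,e)"] d e by auto
    then show "g b' * Dbas q b' (e,e) = 0" by simp
  qed
  ultimately show False by simp
qed

lemma deg_step:
  fixes q :: "'k::field"
  assumes qn: "\<forall>n::nat. n > 0 \<longrightarrow> q ^ n \<noteq> 1"
    and phi: "\<phi> \<in> Autc q"
    and IH: "\<And>b. snd b \<le> m \<Longrightarrow> \<phi> (bas b) \<in> Hle m"
    and b0: "snd b0 \<le> Suc m"
  shows "\<phi> (bas b0) \<in> Hle (Suc m)"
proof (rule ccontr)
  define g where "g = \<phi> (bas b0)"
  have gH: "g \<in> Hsp" using Autc_Hsp[OF phi bas_Hsp] by (simp add: g_def)
  assume "\<phi> (bas b0) \<notin> Hle (Suc m)"
  then obtain d where d: "Suc m < snd d" "g d \<noteq> 0" using gH by (auto simp: Hle_def g_def)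
  obtain e where e: "g e \<noteq> 0" "snd d \<le> snd e" "\<And>b. g b \<noteq> 0 \<Longrightarrow> snd b \<le> snd e"
    using max_deg[OF gH d(2)] by blast
  obtain k where k: "snd e = Suc k" using d e by (metis Suc_lessE less_le_trans)
  have km: "m < k" using d(1) e(2) k by linarith
  define c where "c = ((fst e, 1::nat), (fst e + 1, k))"
  have "Delta q g c = (\<Sum>b'\<in>supp g. if b' = e then g b' * Dbas q b' c else 0)"
    unfolding Delta_def
  proof (rule sum.cong[OF refl])
    fix b' assume "b' \<in> supp g"
    show "g b' * Dbas q b' c = (if b' = e then g b' * Dbas q b' c else 0)"
    proof (cases "Dbas q b' c = 0")
      case False
      then have "b' = e" using Dbas_supp'[OF False] k by (auto simp: c_def prod_eq_iff)
      then show ?thesis by simp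
    qed auto
  qed
  also have "\<dots> = g e * Dbas q e c" using e gH unfolding Hsp_def by (simp add: sum.delta' supp_def)
  also have "Dbas q e c = Dbas q (fst e, Suc k) ((fst e, 1), (fst e + 1, k))"
    unfolding c_def using k by (metis prod.collapse)
  also have "\<dots> = (\<Sum>i<Suc k. q ^ i)" by (rule Dbas_1)
  finally have "Delta q g c \<noteq> 0" using e geo_nz[OF qn] by simp
  moreover have "Delta q g c = 0"
  proof -
    have "Delta q g = tmap \<phi> (Dbas q b0)" using Autc_Delta[OF phi bas_Hsp] Delta_bas by (metis g_def)
    then have "Delta q g c = (\<Sum>p\<in>supp (Dbas q b0). Dbas q b0 p * \<phi> (bas (fst p)) (fst c) * \<phi> (bas (snd p)) (snd c))"
      by (simp add: tmap_eq)
    also have "\<dots> = 0"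
    proof (rule sum.neutral, rule ballI)
      fix p assume "p \<in> supp (Dbas q b0)"
      then have "Dbas q b0 p \<noteq> 0" by (simp add: supp_def)
      from Dbas_supp'[OF this] b0 have s: "snd (fst p) + snd (snd p) \<le> Suc m" by simp
      show "Dbas q b0 p * \<phi> (bas (fst p)) (fst c) * \<phi> (bas (snd p)) (snd c) = 0"
      proof (cases "snd (fst p) = 0")
        case True
        then have "\<phi> (bas (fst p)) \<in> Hle 0" by (rule deg_base[OF phi])
        then have "\<phi> (bas (fst p)) (fst c) = 0" by (simp add: Hle_def c_def)
        then show ?thesis by simp
      next
        case False
        then have "snd (snd p) \<le> m" using s by simp
        then have "\<phi> (bas (snd p)) \<in> Hle m" by (rule IH)
        then have "\<phi> (bas (snd p)) (snd c) = 0" using km by (simp add: Hle_def c_def)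
        then show ?thesis by simp
      qed
    qed
    finally show ?thesis .
  qed
  ultimately show False by simp
qed

lemma deg_all:
  fixes q :: "'k::field"
  assumes qn: "\<forall>n::nat. n > 0 \<longrightarrow> q ^ n \<noteq> 1"
    and phi: "\<phi> \<in> Autc q"
  shows "snd b \<le> m \<Longrightarrow> \<phi> (bas b) \<in> Hle m"
proof (induction m arbitrary: b)
  case 0 then show ?case using deg_base[OF phi] by simp
next
  case (Suc m) then show ?case using deg_step[OF qn phi] by blast
qed

lemma Autc_Hle:
  fixes q :: "'k::field"
  assumes qn: "\<forall>n::nat. n > 0 \<longrightarrow> q ^ n \<noteq> 1"
    and phi: "\<phi> \<in> Autc q" and h: "h \<in> Hle m"
  shows "\<phi> h \<in> Hle m"
proof -
  have hH: "h \<in> Hsp" using h by (simp add: Hle_def)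
  have e: "\<phi> h = (\<lambda>c. \<Sum>b\<in>supp h. h b * \<phi> (bas b) c)" using klin_expand[OF Autc_lin[OF phi] hH] .
  have "\<phi> h c = 0" if "m < snd c" for c
    unfolding e
  proof (rule sum.neutral, rule ballI)
    fix b assume "b \<in> supp h"
    then have "snd b \<le> m"
    proof (rule contrapos_pp)
      assume "\<not> snd b \<le> m"
      then have "h b = 0" using h by (cases b) (auto simp: Hle_def)
      then show "b \<notin> supp h" by (simp add: supp_def)
    qed
    then have "\<phi> (bas b) \<in> Hle m" by (rule deg_all[OF qn phi])
    then show "h b * \<phi> (bas b) c = 0" using that by (cases c) (auto simp: Hle_def)
  qed
  then show ?thesis using Autc_Hsp[OF phi hH] by (simp add: Hle_def)
qed



lemma Bij_inv_props:
  assumes "\<phi> \<in> Bij (Hsp :: 'k::field hq set)"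
  shows "\<And>y. y \<in> Hsp \<Longrightarrow> inv_into Hsp \<phi> y \<in> Hsp"
    and "\<And>y. y \<in> Hsp \<Longrightarrow> \<phi> (inv_into Hsp \<phi> y) = y"
    and "\<And>x. x \<in> Hsp \<Longrightarrow> inv_into Hsp \<phi> (\<phi> x) = x"
  using assms by (auto simp: Bij_def bij_betw_def inv_into_into f_inv_into_f)

lemma id_Autc: "(\<lambda>x\<in>(Hsp :: 'k::field hq set). x) \<in> Autc q"
  unfolding Autc_def
proof (intro CollectI conjI ballI)
  show "(\<lambda>x\<in>(Hsp :: 'k::field hq set). x) \<in> Bij Hsp" by (rule id_Bij)
  show "klinear (\<lambda>x\<in>(Hsp :: 'k::field hq set). x)"
    unfolding klinear_def by (simp add: Hsp_add Hsp_smul)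
  fix f :: "'k hq" assume f: "f \<in> Hsp"
  show "Delta q ((\<lambda>x\<in>Hsp. x) f) = tmap (\<lambda>x\<in>Hsp. x) (Delta q f)"
    using f by (simp add: tmap_id finite_Delta bas_Hsp)
  show "eps ((\<lambda>x\<in>Hsp. x) f) = eps f" using f by simp
qed

lemma comp_Autc:
  assumes p: "\<phi> \<in> Autc q" and c: "\<chi> \<in> Autc q"
  shows "compose Hsp \<phi> \<chi> \<in> Autc q"
  unfolding Autc_def
proof (intro CollectI conjI ballI)
  show "compose Hsp \<phi> \<chi> \<in> Bij Hsp" by (rule compose_Bij[OF Autc_Bij[OF p] Autc_Bij[OF c]])
  show "klinear (compose Hsp \<phi> \<chi>)"
    unfolding klinear_def
  proof (intro conjI ballI allI)
    fix f g :: "'a hq" assume f: "f \<in> Hsp" and g: "g \<in> Hsp"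
    show "compose Hsp \<phi> \<chi> (\<lambda>b. f b + g b) = (\<lambda>b. compose Hsp \<phi> \<chi> f b + compose Hsp \<phi> \<chi> g b)"
      using f g by (simp add: compose_def Hsp_add klin_add[OF Autc_lin[OF c]] klin_add[OF Autc_lin[OF p]] Autc_Hsp[OF c])
  next
    fix f :: "'a hq" and a assume f: "f \<in> Hsp"
    show "compose Hsp \<phi> \<chi> (\<lambda>b. a * f b) = (\<lambda>b. a * compose Hsp \<phi> \<chi> f b)"
      using f by (simp add: compose_def Hsp_smul klin_smul[OF Autc_lin[OF c]] klin_smul[OF Autc_lin[OF p]] Autc_Hsp[OF c])
  qed
  fix f :: "'a hq" assume f: "f \<in> Hsp"
  have "Delta q (compose Hsp \<phi> \<chi> f) = Delta q (\<phi> (\<chi> f))" using f by (simp add: compose_def)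
  also have "\<dots> = tmap \<phi> (tmap \<chi> (Delta q f))"
    using Autc_Delta[OF p Autc_Hsp[OF c f]] Autc_Delta[OF c f] by simp
  also have "\<dots> = tmap (compose Hsp \<phi> \<chi>) (Delta q f)"
    by (rule tmap_comp[OF Autc_lin[OF p] Autc_lin[OF c] Autc_Hsp[OF c bas_Hsp] finite_Delta])
      (simp add: compose_def bas_Hsp)
  finally show "Delta q (compose Hsp \<phi> \<chi> f) = tmap (compose Hsp \<phi> \<chi>) (Delta q f)" .
  show "eps (compose Hsp \<phi> \<chi> f) = eps f"
    using f by (simp add: compose_def Autc_eps[OF p] Autc_eps[OF c] Autc_Hsp[OF c])
qed

lemma inv_Autc:
  assumes p: "\<phi> \<in> Autc q"
  shows "(\<lambda>x\<in>Hsp. inv_into Hsp \<phi> x) \<in> Autc q"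
  unfolding Autc_def
proof (intro CollectI conjI ballI)
  let ?\<psi> = "\<lambda>x\<in>Hsp. inv_into Hsp \<phi> x"
  note B = Bij_inv_props[OF Autc_Bij[OF p]]
  note L = Autc_lin[OF p]
  show "?\<psi> \<in> Bij Hsp" by (rule restrict_inv_into_Bij[OF Autc_Bij[OF p]])
  show "klinear ?\<psi>"
    unfolding klinear_def
  proof (intro conjI ballI allI)
    fix f g :: "'a hq" assume f: "f \<in> Hsp" and g: "g \<in> Hsp"
    have "\<phi> (\<lambda>b. ?\<psi> f b + ?\<psi> g b) = (\<lambda>b. f b + g b)"
      using f g B by (simp add: klin_add[OF L])
    then have "?\<psi> (\<lambda>b. f b + g b) = ?\<psi> (\<phi> (\<lambda>b. ?\<psi> f b + ?\<psi> g b))" by simp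
    also have "\<dots> = (\<lambda>b. ?\<psi> f b + ?\<psi> g b)"
      using f g B Hsp_add[of "?\<psi> f" "?\<psi> g"] Autc_Hsp[OF p] by simp
    finally show "?\<psi> (\<lambda>b. f b + g b) = (\<lambda>b. ?\<psi> f b + ?\<psi> g b)" .
  next
    fix f :: "'a hq" and a assume f: "f \<in> Hsp"
    have "\<phi> (\<lambda>b. a * ?\<psi> f b) = (\<lambda>b. a * f b)"
      using f B by (simp add: klin_smul[OF L])
    then have "?\<psi> (\<lambda>b. a * f b) = ?\<psi> (\<phi> (\<lambda>b. a * ?\<psi> f b))" by simp
    also have "\<dots> = (\<lambda>b. a * ?\<psi> f b)"
      using f B Hsp_smul[of "?\<psi> f" a] Autc_Hsp[OF p] by simp
    finally show "?\<psi> (\<lambda>b. a * f b) = (\<lambda>b. a * ?\<psi> f b)" .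
  qed
  then have Lp: "klinear ?\<psi>" .
  fix g :: "'a hq" assume g: "g \<in> Hsp"
  define f where "f = ?\<psi> g"
  have fH: "f \<in> Hsp" using g B by (simp add: f_def)
  have pf: "\<phi> f = g" using g B by (simp add: f_def)
  have "tmap ?\<psi> (Delta q g) = tmap ?\<psi> (tmap \<phi> (Delta q f))" using Autc_Delta[OF p fH] pf by simp
  also have "\<dots> = tmap (\<lambda>x. x) (Delta q f)"
    by (rule tmap_comp[OF Lp L Autc_Hsp[OF p bas_Hsp] finite_Delta]) (simp add: B bas_Hsp Autc_Hsp[OF p])
  also have "\<dots> = Delta q f" by (rule tmap_id[OF finite_Delta]) simp
  finally show "Delta q (?\<psi> g) = tmap ?\<psi> (Delta q g)" by (simp add: f_def)
  show "eps (?\<psi> g) = eps g" using Autc_eps[OF p fH] pf by (simp add: f_def)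
qed

lemma subgroup_Autc: "subgroup (Autc q) (BijGroup (Hsp :: 'k::field hq set))"
proof (rule group.subgroupI[OF group_BijGroup])
  show "Autc q \<subseteq> carrier (BijGroup Hsp)" by (auto simp: BijGroup_def Autc_def)
  show "Autc q \<noteq> {}" using id_Autc by blast
  fix a assume a: "a \<in> Autc q"
  show "inv\<^bsub>BijGroup Hsp\<^esub> a \<in> Autc q"
    using inv_BijGroup[OF Autc_Bij[OF a]] inv_Autc[OF a] by simp
  fix b assume b: "b \<in> Autc q"
  show "a \<otimes>\<^bsub>BijGroup Hsp\<^esub> b \<in> Autc q"
    using comp_Autc[OF a b] Autc_Bij[OF a] Autc_Bij[OF b] by (simp add: BijGroup_def)
qed

lemma subgroup_Autm: "subgroup (Autm q m) (BijGroup (Hsp :: 'k::field hq set))"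
proof (rule group.subgroupI[OF group_BijGroup])
  show "Autm q m \<subseteq> carrier (BijGroup Hsp)" by (auto simp: BijGroup_def Autc_def Autm_def)
  show "Autm q m \<noteq> {}" using id_Autc[of q] by (auto simp: Autm_def Hle_def)
  fix a assume a: "a \<in> Autm q m"
  then have aA: "a \<in> Autc q" by (simp add: Autm_def)
  note B = Bij_inv_props[OF Autc_Bij[OF aA]]
  have "(\<lambda>x\<in>Hsp. inv_into Hsp a x) \<in> Autm q m"
    unfolding Autm_def
  proof (intro CollectI conjI ballI)
    show "(\<lambda>x\<in>Hsp. inv_into Hsp a x) \<in> Autc q" by (rule inv_Autc[OF aA])
    fix h :: "'k hq" assume h: "h \<in> Hle m"
    then have "a h = h" "h \<in> Hsp" using a by (auto simp: Autm_def Hle_def)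
    then show "(\<lambda>x\<in>Hsp. inv_into Hsp a x) h = h" using B(3)[of h] by simp
  qed
  then show "inv\<^bsub>BijGroup Hsp\<^esub> a \<in> Autm q m"
    using inv_BijGroup[OF Autc_Bij[OF aA]] by simp
  fix b assume b: "b \<in> Autm q m"
  then have bA: "b \<in> Autc q" by (simp add: Autm_def)
  have "compose Hsp a b \<in> Autm q m"
    unfolding Autm_def
  proof (intro CollectI conjI ballI)
    show "compose Hsp a b \<in> Autc q" by (rule comp_Autc[OF aA bA])
    fix h :: "'k hq" assume h: "h \<in> Hle m"
    then show "compose Hsp a b h = h" using a b by (auto simp: Autm_def Hle_def compose_def)
  qed
  then show "a \<otimes>\<^bsub>BijGroup Hsp\<^esub> b \<in> Autm q m"
    using Autc_Bij[OF aA] Autc_Bij[OF bA] by (simp add: BijGroup_def)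
qed

theorem lemma3p1:
  fixes q :: "'k::field"
  assumes "q \<noteq> 0"
    and "\<forall>n::nat. n > 0 \<longrightarrow> q ^ n \<noteq> 1"
  shows "(\<forall>m::nat. m \<ge> 1 \<longrightarrow> Autm q m \<lhd> AutcGroup q)
       \<and> Autm q 1 \<subseteq> Aut0 q
       \<and> (\<forall>m::nat. m \<ge> 1 \<longrightarrow> Autm q (Suc m) \<subseteq> Autm q m)"
proof (intro conjI allI impI)
  fix m :: nat
  let ?G = "BijGroup (Hsp :: 'k hq set)"
  have gG: "group ?G" by (rule group_BijGroup)
  have sA: "subgroup (Autc q) ?G" by (rule subgroup_Autc)
  have gA: "group (AutcGroup q)" unfolding AutcGroup_def by (rule subgroup.subgroup_is_group[OF sA gG])
  have sM: "subgroup (Autm q m) (AutcGroup q)" unfolding AutcGroup_def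
    by (rule group.subgroup_incl[OF gG subgroup_Autm sA]) (auto simp: Autm_def)
  show "Autm q m \<lhd> AutcGroup q"
    unfolding group.normal_inv_iff[OF gA]
  proof (intro conjI ballI sM)
    fix x h assume x: "x \<in> carrier (AutcGroup q)" and h: "h \<in> Autm q m"
    have xA: "x \<in> Autc q" using x by (simp add: AutcGroup_def)
    have hA: "h \<in> Autc q" using h by (simp add: Autm_def)
    note B = Bij_inv_props[OF Autc_Bij[OF xA]]
    let ?xi = "\<lambda>y\<in>Hsp. inv_into Hsp x y"
    have ixA: "?xi \<in> Autc q" by (rule inv_Autc[OF xA])
    have inv: "inv\<^bsub>AutcGroup q\<^esub> x = ?xi"
      unfolding AutcGroup_def using group.m_inv_consistent[OF gG sA xA] inv_BijGroup[OF Autc_Bij[OF xA]]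
      by simp
    have "x \<otimes>\<^bsub>AutcGroup q\<^esub> h \<otimes>\<^bsub>AutcGroup q\<^esub> inv\<^bsub>AutcGroup q\<^esub> x = compose Hsp (compose Hsp x h) ?xi"
      unfolding inv using Autc_Bij[OF xA] Autc_Bij[OF hA] Autc_Bij[OF ixA] compose_Bij[OF Autc_Bij[OF xA] Autc_Bij[OF hA]]
      by (simp add: AutcGroup_def BijGroup_def)
    also have "\<dots> \<in> Autm q m"
      unfolding Autm_def
    proof (intro CollectI conjI ballI)
      show "compose Hsp (compose Hsp x h) ?xi \<in> Autc q"
        by (rule comp_Autc[OF comp_Autc[OF xA hA] ixA])
      fix h0 :: "'k hq" assume h0: "h0 \<in> Hle m"
      have h0H: "h0 \<in> Hsp" using h0 by (simp add: Hle_def)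
      have "?xi h0 \<in> Hle m" by (rule Autc_Hle[OF assms(2) ixA h0])
      then have "h (?xi h0) = ?xi h0" using h by (simp add: Autm_def)
      then show "compose Hsp (compose Hsp x h) ?xi h0 = h0"
        using h0H B by (simp add: compose_def)
    qed
    finally show "x \<otimes>\<^bsub>AutcGroup q\<^esub> h \<otimes>\<^bsub>AutcGroup q\<^esub> inv\<^bsub>AutcGroup q\<^esub> x \<in> Autm q m" .
  qed
next
  show "Autm q 1 \<subseteq> Aut0 q"
  proof
    fix \<phi> assume p: "\<phi> \<in> Autm q 1"
    have "bas (0,0) \<in> (Hle 1 :: 'k hq set)" using bas_Hsp[of "(0,0)"] unfolding Hle_def by (simp add: bas_def)
    then show "\<phi> \<in> Aut0 q" using p by (simp add: Autm_def Aut0_def)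
  qed
next
  fix m :: nat
  show "Autm q (Suc m) \<subseteq> Autm q m" by (auto simp: Autm_def Hle_def)
qed


end
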